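(* Let $K$ be a field, $X$ a finite connected poset, and fix $u_0\in X$. Let $\varphi,\psi$ be elementary Lie automorphisms of $I(X,K)$ such that $\theta_\varphi=\theta_\psi$ and $\varphi(e_z)(u_0,u_0)=\psi(e_z)(u_0,u_0)$ for all $z\in X$. Then $\varphi(e_z)=\psi(e_z)$ for all $z\in X$.
   Context: $I(X,K)$ is the incidence algebra: functions $f:X\times X\to K$ with $f(x,y)=0$ unless $x\le y$, product $(fg)(x,y)=\sum_{x\le t\le y}f(x,t)g(t,y)$; $e_{xy}$ ($x\le y$) is the basis element equal to $1$ at $(x,y)$ and $0$ elsewhere, $e_z=e_{zz}$. $B=\{e_{xy}:x<y\}$. A Lie automorphism is a bijective linear map preserving $[f,g]=fg-gf$. With $l(\lfloor x,y\rfloor)$ the maximal length of a chain in $\{z:x\le z\le y\}$ and $L_i=\mathrm{span}_K\{e_{xy}:l(\lfloor x,y\rfloor)=i\}$, for a Lie automorphism $\chi$ let $\widetilde\chi$ send $e_{xy}\in L_i$ to the $L_i$-component of $\chi(e_{xy})$. A Lie automorphism $\varphi$ is elementary if $\varphi=\widetilde\chi$ for some Lie automorphism $\chi$ (equivalently $\varphi(L_i)\subseteq L_i$ for all $i$). For elementary $\varphi$, for each $x<y$ there are a unique $e_{uv}\in B$ and $k\in K^*$ with $\varphi(e_{xy})=k e_{uv}$; set $\theta_\varphi(e_{xy})=e_{uv}$. Connected means any two elements are joined by a sequence in which consecutive elements are in a covering relation. *)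

theory Defs
  imports Main
begin

text \<open>Incidence algebra I(X,K) of a finite poset X (the whole type 'a) over a field K.
Elements are functions f :: 'a => 'a => 'k vanishing off the order relation.\<close>

definition inc_alg :: "('a::order \<Rightarrow> 'a \<Rightarrow> 'k::field) set" where
  "inc_alg = {f. \<forall>x y. \<not> x \<le> y \<longrightarrow> f x y = 0}"

definition inc_mult :: "('a::{finite,order} \<Rightarrow> 'a \<Rightarrow> 'k::field) \<Rightarrow> ('a \<Rightarrow> 'a \<Rightarrow> 'k) \<Rightarrow> 'a \<Rightarrow> 'a \<Rightarrow> 'k" where
  "inc_mult f g = (\<lambda>x y. \<Sum>t\<in>{t. x \<le> t \<and> t \<le> y}. f x t * g t y)"

definition lie_bracket :: "('a::{finite,order} \<Rightarrow> 'a \<Rightarrow> 'k::field) \<Rightarrow> ('a \<Rightarrow> 'a \<Rightarrow> 'k) \<Rightarrow> 'a \<Rightarrow> 'a \<Rightarrow> 'k" where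
  "lie_bracket f g = (\<lambda>x y. inc_mult f g x y - inc_mult g f x y)"

text \<open>Basis element e_{xy}; e_z = e_{zz}.\<close>
definition eij :: "'a \<Rightarrow> 'a \<Rightarrow> 'a \<Rightarrow> 'a \<Rightarrow> 'k::field" where
  "eij x y = (\<lambda>u v. if u = x \<and> v = y then 1 else 0)"

definition is_lie_aut :: "(('a::{finite,order} \<Rightarrow> 'a \<Rightarrow> 'k::field) \<Rightarrow> ('a \<Rightarrow> 'a \<Rightarrow> 'k)) \<Rightarrow> bool" where
  "is_lie_aut \<phi> \<longleftrightarrow>
     bij_betw \<phi> inc_alg inc_alg \<and>
     (\<forall>f\<in>inc_alg. \<forall>g\<in>inc_alg. \<phi> (\<lambda>x y. f x y + g x y) = (\<lambda>x y. \<phi> f x y + \<phi> g x y)) \<and>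
     (\<forall>f\<in>inc_alg. \<forall>c. \<phi> (\<lambda>x y. c * f x y) = (\<lambda>x y. c * \<phi> f x y)) \<and>
     (\<forall>f\<in>inc_alg. \<forall>g\<in>inc_alg. \<phi> (lie_bracket f g) = lie_bracket (\<phi> f) (\<phi> g))"

definition chain_len :: "'a::{finite,order} \<Rightarrow> 'a \<Rightarrow> nat" where
  "chain_len x y = Max {card C - 1 | C. C \<subseteq> {z. x \<le> z \<and> z \<le> y} \<and> (\<forall>a\<in>C. \<forall>b\<in>C. a \<le> b \<or> b \<le> a)}"

text \<open>chi-tilde: linear extension of e_xy |-> L_i-component of chi(e_xy), where e_xy in L_i.\<close>
definition tilde :: "(('a::{finite,order} \<Rightarrow> 'a \<Rightarrow> 'k::field) \<Rightarrow> ('a \<Rightarrow> 'a \<Rightarrow> 'k)) \<Rightarrow> ('a \<Rightarrow> 'a \<Rightarrow> 'k) \<Rightarrow> 'a \<Rightarrow> 'a \<Rightarrow> 'k" where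
  "tilde \<chi> f = (\<lambda>u v. if u \<le> v then
       (\<Sum>p\<in>{(x,y). x \<le> y \<and> chain_len x y = chain_len u v}. f (fst p) (snd p) * \<chi> (eij (fst p) (snd p)) u v)
     else 0)"

definition elementary :: "(('a::{finite,order} \<Rightarrow> 'a \<Rightarrow> 'k::field) \<Rightarrow> ('a \<Rightarrow> 'a \<Rightarrow> 'k)) \<Rightarrow> bool" where
  "elementary \<phi> \<longleftrightarrow> is_lie_aut \<phi> \<and> (\<exists>\<chi>. is_lie_aut \<chi> \<and> (\<forall>f\<in>inc_alg. \<phi> f = tilde \<chi> f))"

text \<open>theta_phi(e_xy) = e_uv where phi(e_xy) = k e_uv, k nonzero, u < v (represented by the pair (u,v)).\<close>
definition theta :: "(('a::{finite,order} \<Rightarrow> 'a \<Rightarrow> 'k::field) \<Rightarrow> ('a \<Rightarrow> 'a \<Rightarrow> 'k)) \<Rightarrow> 'a \<Rightarrow> 'a \<Rightarrow> 'a \<times> 'a" where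
  "theta \<phi> x y = (THE p. fst p < snd p \<and>
      (\<exists>k. k \<noteq> 0 \<and> \<phi> (eij x y) = (\<lambda>a b. k * eij (fst p) (snd p) a b)))"

definition covers :: "'a::order \<Rightarrow> 'a \<Rightarrow> bool" where
  "covers a b \<longleftrightarrow> a < b \<and> \<not> (\<exists>c. a < c \<and> c < b)"

definition poset_connected :: "'a::order set \<Rightarrow> bool" where
  "poset_connected S \<longleftrightarrow> (\<forall>a\<in>S. \<forall>b\<in>S. (\<lambda>a b. covers a b \<or> covers b a)\<^sup>*\<^sup>* a b)"

end

theory Submission
  imports Defs
begin

lemma eij_in: "(x::'a::order) \<le> y \<Longrightarrow> (eij x y :: 'a \<Rightarrow> 'a \<Rightarrow> 'k::field) \<in> inc_alg"
  unfolding inc_alg_def eij_def by auto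

lemma chain_len_refl: "chain_len (x::'a::{finite,order}) x = 0"
proof -
  have "{card C - 1 | C. C \<subseteq> {z. x \<le> z \<and> z \<le> x} \<and> (\<forall>a\<in>C. \<forall>b\<in>C. a \<le> b \<or> b \<le> a)} = {0}"
  proof (intro equalityI subsetI)
    fix n assume "n \<in> {card C - 1 | C. C \<subseteq> {z. x \<le> z \<and> z \<le> x} \<and> (\<forall>a\<in>C. \<forall>b\<in>C. a \<le> b \<or> b \<le> a)}"
    then obtain C where C: "n = card C - 1" "C \<subseteq> {z. x \<le> z \<and> z \<le> x}" by blast
    have "C \<subseteq> {x}" using C(2) by (auto intro: order.antisym)
    then have "card C \<le> 1" using card_mono[of "{x}" C] by simp
    then show "n \<in> {0}" using C(1) by simp
  next
    fix n assume "n \<in> {0::nat}"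
    then show "n \<in> {card C - 1 | C. C \<subseteq> {z. x \<le> z \<and> z \<le> x} \<and> (\<forall>a\<in>C. \<forall>b\<in>C. a \<le> b \<or> b \<le> a)}"
      by (auto intro!: exI[of _ "{}"])
  qed
  then show ?thesis unfolding chain_len_def by simp
qed

lemma chain_len_lt: "(x::'a::{finite,order}) < y \<Longrightarrow> chain_len x y \<ge> 1"
proof -
  assume xy: "x < y"
  let ?A = "{C. C \<subseteq> {z. x \<le> z \<and> z \<le> y} \<and> (\<forall>a\<in>C. \<forall>b\<in>C. a \<le> b \<or> b \<le> a)}"
  have eq: "{card C - 1 | C. C \<subseteq> {z. x \<le> z \<and> z \<le> y} \<and> (\<forall>a\<in>C. \<forall>b\<in>C. a \<le> b \<or> b \<le> a)} = (\<lambda>C. card C - 1) ` ?A"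
    by auto
  have fin: "finite ((\<lambda>C. card C - 1) ` ?A)" by simp
  have "{x,y} \<in> ?A" using xy by auto
  then have m: "card {x,y} - 1 \<in> (\<lambda>C. card C - 1) ` ?A" by (rule imageI)
  have c: "card {x,y} - 1 = 1" using xy by simp
  have "card {x,y} - 1 \<le> Max ((\<lambda>C. card C - 1) ` ?A)" by (rule Max_ge[OF fin m])
  then have "1 \<le> Max ((\<lambda>C. card C - 1) ` ?A)" by (simp only: c)
  then show ?thesis unfolding chain_len_def eq .
qed

lemma chain_len_zero_iff: "(x::'a::{finite,order}) \<le> y \<Longrightarrow> chain_len x y = 0 \<longleftrightarrow> x = y"
  using chain_len_refl chain_len_lt by (metis le_less not_one_le_zero)

lemma tilde_basis:
  fixes \<chi> :: "('a::{finite,order} \<Rightarrow> 'a \<Rightarrow> 'k::field) \<Rightarrow> ('a \<Rightarrow> 'a \<Rightarrow> 'k)"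
  assumes "x \<le> y" "u \<le> v"
  shows "tilde \<chi> (eij x y) u v = (if chain_len x y = chain_len u v then \<chi> (eij x y) u v else 0)"
proof -
  let ?S = "{(a,b). a \<le> b \<and> chain_len a b = chain_len u v}"
  have "(\<Sum>p\<in>?S. eij x y (fst p) (snd p) * \<chi> (eij (fst p) (snd p)) u v)
      = (\<Sum>p\<in>?S. if p = (x,y) then \<chi> (eij x y) u v else 0)"
    by (rule sum.cong) (auto simp: eij_def)
  also have "\<dots> = (if (x,y) \<in> ?S then \<chi> (eij x y) u v else 0)"
    by (rule sum.delta[OF finite])
  finally show ?thesis unfolding tilde_def using assms by simp
qed

lemma tilde_diag:
  fixes \<chi> :: "('a::{finite,order} \<Rightarrow> 'a \<Rightarrow> 'k::field) \<Rightarrow> ('a \<Rightarrow> 'a \<Rightarrow> 'k)"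
  shows "tilde \<chi> f a a = (\<Sum>z\<in>UNIV. f z z * \<chi> (eij z z) a a)"
proof -
  have S: "{(x,y). x \<le> y \<and> chain_len x y = chain_len a a} = (\<lambda>z. (z,z)) ` UNIV"
    using chain_len_zero_iff chain_len_refl by (auto simp: chain_len_refl)
  have "tilde \<chi> f a a = (\<Sum>p\<in>(\<lambda>z. (z,z)) ` UNIV. f (fst p) (snd p) * \<chi> (eij (fst p) (snd p)) a a)"
    unfolding tilde_def S by simp
  also have "\<dots> = (\<Sum>z\<in>UNIV. f z z * \<chi> (eij z z) a a)"
    by (subst sum.reindex) (auto simp: inj_on_def)
  finally show ?thesis .
qed

lemma bracket_diag:
  fixes D g :: "'a::{finite,order} \<Rightarrow> 'a \<Rightarrow> 'k::field"
  assumes "\<forall>a t. a \<noteq> t \<longrightarrow> D a t = 0"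
  shows "lie_bracket D g a b = (if a \<le> b then (D a a - D b b) * g a b else 0)"
proof (cases "a \<le> b")
  case True
  have 1: "(\<Sum>t\<in>{t. a \<le> t \<and> t \<le> b}. D a t * g t b) = D a a * g a b"
  proof -
    have "(\<Sum>t\<in>{t. a \<le> t \<and> t \<le> b}. D a t * g t b) = (\<Sum>t\<in>{t. a \<le> t \<and> t \<le> b}. if t = a then D a a * g a b else 0)"
      by (rule sum.cong) (use assms in auto)
    also have "\<dots> = D a a * g a b" using True by (subst sum.delta[OF finite]) auto
    finally show ?thesis .
  qed
  have 2: "(\<Sum>t\<in>{t. a \<le> t \<and> t \<le> b}. g a t * D t b) = g a b * D b b"
  proof -
    have "(\<Sum>t\<in>{t. a \<le> t \<and> t \<le> b}. g a t * D t b) = (\<Sum>t\<in>{t. a \<le> t \<and> t \<le> b}. if t = b then g a b * D b b else 0)"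
      by (rule sum.cong) (use assms in auto)
    also have "\<dots> = g a b * D b b" using True by (subst sum.delta[OF finite]) auto
    finally show ?thesis .
  qed
  show ?thesis unfolding lie_bracket_def inc_mult_def using True 1 2 by (simp add: algebra_simps)
next
  case False
  then have e: "{t. a \<le> t \<and> t \<le> b} = {}" by (auto dest: order_trans)
  show ?thesis unfolding lie_bracket_def inc_mult_def e using False by simp
qed


lemma zero_in: "(\<lambda>a b. 0) \<in> inc_alg" unfolding inc_alg_def by simp

lemma phi_zero:
  fixes \<phi> :: "('a::{finite,order} \<Rightarrow> 'a \<Rightarrow> 'k::field) \<Rightarrow> ('a \<Rightarrow> 'a \<Rightarrow> 'k)"
  assumes "is_lie_aut \<phi>" shows "\<phi> (\<lambda>a b. 0) = (\<lambda>a b. 0)"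
proof -
  have H: "\<forall>f\<in>inc_alg. \<forall>c. \<phi> (\<lambda>x y. c * f x y) = (\<lambda>x y. c * \<phi> f x y)"
    using assms unfolding is_lie_aut_def by blast
  show ?thesis using H[rule_format, OF zero_in, of 0] by simp
qed

lemma phi_in:
  fixes \<phi> :: "('a::{finite,order} \<Rightarrow> 'a \<Rightarrow> 'k::field) \<Rightarrow> ('a \<Rightarrow> 'a \<Rightarrow> 'k)"
  assumes "is_lie_aut \<phi>" "f \<in> inc_alg" shows "\<phi> f \<in> inc_alg"
proof -
  have b: "bij_betw \<phi> inc_alg inc_alg" using assms(1) unfolding is_lie_aut_def by blast
  show ?thesis by (rule bij_betw_apply[OF b assms(2)])
qed

lemma phi_surj:
  fixes \<phi> :: "('a::{finite,order} \<Rightarrow> 'a \<Rightarrow> 'k::field) \<Rightarrow> ('a \<Rightarrow> 'a \<Rightarrow> 'k)"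
  assumes "is_lie_aut \<phi>" "g \<in> inc_alg" shows "\<exists>f\<in>inc_alg. \<phi> f = g"
proof -
  have "\<phi> ` inc_alg = inc_alg" using assms unfolding is_lie_aut_def bij_betw_def by blast
  then show ?thesis using assms(2) by (metis imageE)
qed

lemma phi_inj:
  fixes \<phi> :: "('a::{finite,order} \<Rightarrow> 'a \<Rightarrow> 'k::field) \<Rightarrow> ('a \<Rightarrow> 'a \<Rightarrow> 'k)"
  assumes "is_lie_aut \<phi>" "f \<in> inc_alg" "g \<in> inc_alg" "\<phi> f = \<phi> g" shows "f = g"
  using assms unfolding is_lie_aut_def bij_betw_def inj_on_def by blast

lemma phi_diag:
  fixes \<phi> :: "('a::{finite,order} \<Rightarrow> 'a \<Rightarrow> 'k::field) \<Rightarrow> ('a \<Rightarrow> 'a \<Rightarrow> 'k)"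
  assumes "elementary \<phi>" "a \<noteq> b" shows "\<phi> (eij z z) a b = 0"
proof -
  obtain \<chi> where ch: "\<forall>f\<in>inc_alg. \<phi> f = tilde \<chi> f" using assms unfolding elementary_def by blast
  have "\<phi> (eij z z) a b = tilde \<chi> (eij z z) a b" using ch[rule_format, OF eij_in[of z z]] by simp
  also have "\<dots> = 0"
  proof (cases "a \<le> b")
    case True
    then have "a < b" using assms by simp
    then have "chain_len a b \<ge> 1" by (rule chain_len_lt)
    then show ?thesis using tilde_basis[of z z a b \<chi>] True chain_len_refl[of z] by simp
  next
    case False then show ?thesis unfolding tilde_def by simp
  qed
  finally show ?thesis .
qed

lemma phi_diag_eval:
  fixes \<phi> :: "('a::{finite,order} \<Rightarrow> 'a \<Rightarrow> 'k::field) \<Rightarrow> ('a \<Rightarrow> 'a \<Rightarrow> 'k)"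
  assumes "elementary \<phi>" "f \<in> inc_alg" shows "\<phi> f a a = (\<Sum>z\<in>UNIV. f z z * \<phi> (eij z z) a a)"
proof -
  obtain \<chi> where ch: "\<forall>f\<in>inc_alg. \<phi> f = tilde \<chi> f" using assms unfolding elementary_def by blast
  have "\<phi> f = tilde \<chi> f" using ch assms(2) by blast
  then have "\<phi> f a a = (\<Sum>z\<in>UNIV. f z z * \<chi> (eij z z) a a)" by (simp only: tilde_diag)
  also have "\<dots> = (\<Sum>z\<in>UNIV. f z z * \<phi> (eij z z) a a)"
  proof (rule sum.cong)
    fix z
    have "\<phi> (eij z z) a a = tilde \<chi> (eij z z) a a" using ch[rule_format, OF eij_in[of z z]] by simp
    also have "\<dots> = \<chi> (eij z z) a a" using tilde_basis[of z z a a \<chi>] by (simp add: chain_len_refl)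
    finally show "f z z * \<chi> (eij z z) a a = f z z * \<phi> (eij z z) a a" by simp
  qed simp
  finally show ?thesis .
qed

lemma bracket_rel:
  fixes \<phi> :: "('a::{finite,order} \<Rightarrow> 'a \<Rightarrow> 'k::field) \<Rightarrow> ('a \<Rightarrow> 'a \<Rightarrow> 'k)"
  assumes el: "elementary \<phi>" and xy: "x \<le> y"
  shows "(\<phi> (eij z z) a a - \<phi> (eij z z) b b) * \<phi> (eij x y) a b
       = ((eij z z x x - eij z z y y) :: 'k) * \<phi> (eij x y) a b"
proof -
  have la: "is_lie_aut \<phi>" using el unfolding elementary_def by blast
  define c :: 'k where "c = eij z z x x - eij z z y y"
  have dz: "\<forall>a t. a \<noteq> t \<longrightarrow> (eij z z :: 'a \<Rightarrow> 'a \<Rightarrow> 'k) a t = 0" unfolding eij_def by auto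
  have L: "lie_bracket (eij z z) (eij x y) = (\<lambda>a b. c * (eij x y :: 'a \<Rightarrow> 'a \<Rightarrow> 'k) a b)"
  proof (intro ext)
    fix a b
    show "lie_bracket (eij z z) (eij x y) a b = c * (eij x y :: 'a \<Rightarrow> 'a \<Rightarrow> 'k) a b"
      unfolding bracket_diag[OF dz] c_def using xy by (auto simp: eij_def)
  qed
  have H1: "\<forall>f\<in>inc_alg. \<forall>g\<in>inc_alg. \<phi> (lie_bracket f g) = lie_bracket (\<phi> f) (\<phi> g)"
    using la unfolding is_lie_aut_def by blast
  have H2: "\<forall>f\<in>inc_alg. \<forall>c. \<phi> (\<lambda>x y. c * f x y) = (\<lambda>x y. c * \<phi> f x y)"
    using la unfolding is_lie_aut_def by blast
  have "\<phi> (lie_bracket (eij z z) (eij x y)) = lie_bracket (\<phi> (eij z z)) (\<phi> (eij x y))"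
    using H1[rule_format, OF eij_in[OF order_refl[of z]] eij_in[OF xy]] .
  moreover have "\<phi> (\<lambda>a b. c * (eij x y :: 'a \<Rightarrow> 'a \<Rightarrow> 'k) a b) = (\<lambda>a b. c * \<phi> (eij x y) a b)"
    using H2[rule_format, OF eij_in[OF xy]] .
  ultimately have E: "lie_bracket (\<phi> (eij z z)) (\<phi> (eij x y)) a b = c * \<phi> (eij x y) a b"
    unfolding L by (metis (no_types))
  have dz2: "\<forall>a t. a \<noteq> t \<longrightarrow> \<phi> (eij z z) a t = 0" using phi_diag[OF el] by blast
  show ?thesis
  proof (cases "a \<le> b")
    case True
    then show ?thesis using E unfolding bracket_diag[OF dz2] c_def by simp
  next
    case False
    have "\<phi> (eij x y) \<in> inc_alg" using phi_in[OF la eij_in[OF xy]] .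
    then have "\<phi> (eij x y) a b = 0" using False unfolding inc_alg_def by blast
    then show ?thesis by simp
  qed
qed


lemma rel_diff:
  fixes \<phi> :: "('a::{finite,order} \<Rightarrow> 'a \<Rightarrow> 'k::field) \<Rightarrow> ('a \<Rightarrow> 'a \<Rightarrow> 'k)"
  assumes el: "elementary \<phi>" and xy: "x \<le> y" and nz: "\<phi> (eij x y) u v \<noteq> 0"
  shows "\<phi> (eij z z) u u - \<phi> (eij z z) v v = ((eij z z x x - eij z z y y) :: 'k)"
  using bracket_rel[OF el xy, of z u v] nz by simp

lemma eval_diff:
  fixes \<phi> :: "('a::{finite,order} \<Rightarrow> 'a \<Rightarrow> 'k::field) \<Rightarrow> ('a \<Rightarrow> 'a \<Rightarrow> 'k)"
  assumes el: "elementary \<phi>" and xy: "x \<le> y" and nz: "\<phi> (eij x y) u v \<noteq> 0" and f: "f \<in> inc_alg"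
  shows "\<phi> f u u - \<phi> f v v = (\<Sum>z\<in>UNIV. f z z * ((eij z z x x - eij z z y y) :: 'k))"
proof -
  have "\<phi> f u u - \<phi> f v v = (\<Sum>z\<in>UNIV. f z z * \<phi> (eij z z) u u) - (\<Sum>z\<in>UNIV. f z z * \<phi> (eij z z) v v)"
    using phi_diag_eval[OF el f] by simp
  also have "\<dots> = (\<Sum>z\<in>UNIV. f z z * (\<phi> (eij z z) u u - \<phi> (eij z z) v v))"
    by (simp add: sum_subtractf[symmetric] right_diff_distrib)
  also have "\<dots> = (\<Sum>z\<in>UNIV. f z z * ((eij z z x x - eij z z y y) :: 'k))"
    using rel_diff[OF el xy nz] by simp
  finally show ?thesis .
qed

lemma nz_lt:
  fixes \<phi> :: "('a::{finite,order} \<Rightarrow> 'a \<Rightarrow> 'k::field) \<Rightarrow> ('a \<Rightarrow> 'a \<Rightarrow> 'k)"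
  assumes el: "elementary \<phi>" and xy: "x < y" and nz: "\<phi> (eij x y) u v \<noteq> 0"
  shows "u < v"
proof -
  have la: "is_lie_aut \<phi>" using el unfolding elementary_def by blast
  have "\<phi> (eij x y) \<in> inc_alg" using phi_in[OF la eij_in] xy by simp
  then have "u \<le> v" using nz unfolding inc_alg_def by blast
  moreover have "u \<noteq> v"
  proof
    assume "u = v"
    have "x \<le> y" "y \<noteq> x" using xy by auto
    then show False using rel_diff[OF el _ nz, of x] \<open>u = v\<close> by (auto simp: eij_def)
  qed
  ultimately show ?thesis by simp
qed

lemma single:
  fixes \<phi> :: "('a::{finite,order} \<Rightarrow> 'a \<Rightarrow> 'k::field) \<Rightarrow> ('a \<Rightarrow> 'a \<Rightarrow> 'k)"
  assumes el: "elementary \<phi>" and xy: "x < y" and nz: "\<phi> (eij x y) u v \<noteq> 0"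
    and nz2: "\<phi> (eij x y) u' v' \<noteq> 0"
  shows "u' = u \<and> v' = v"
proof -
  have la: "is_lie_aut \<phi>" using el unfolding elementary_def by blast
  have uv: "u < v" by (rule nz_lt[OF el xy nz])
  have uv2: "u' < v'" by (rule nz_lt[OF el xy nz2])
  have E: "\<phi> f u u - \<phi> f v v = \<phi> f u' u' - \<phi> f v' v'" if f: "f \<in> inc_alg" for f
    using eval_diff[OF el _ nz f] eval_diff[OF el _ nz2 f] xy by simp
  obtain fu where fu: "fu \<in> inc_alg" "\<phi> fu = eij u u" using phi_surj[OF la eij_in[OF order_refl[of u]]] by blast
  obtain fv where fv: "fv \<in> inc_alg" "\<phi> fv = eij v v" using phi_surj[OF la eij_in[OF order_refl[of v]]] by blast
  have E1: "(eij u u u u - eij u u v v :: 'k) = eij u u u' u' - eij u u v' v'" using E[OF fu(1)] fu(2) by simp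
  have E2: "(eij v v u u - eij v v v v :: 'k) = eij v v u' u' - eij v v v' v'" using E[OF fv(1)] fv(2) by simp
  show ?thesis
  proof (cases "u' = u")
    case True
    then show ?thesis using E2 uv uv2 by (auto simp: eij_def split: if_splits)
  next
    case False
    then have "v' = u" using E1 uv by (auto simp: eij_def split: if_splits)
    moreover have "u' = v" using E2 uv \<open>v' = u\<close> by (auto simp: eij_def split: if_splits)
    ultimately show ?thesis using uv uv2 by simp
  qed
qed


lemma fun_cong2: "f = g \<Longrightarrow> f a b = g a b" by simp

lemma shape:
  fixes \<phi> :: "('a::{finite,order} \<Rightarrow> 'a \<Rightarrow> 'k::field) \<Rightarrow> ('a \<Rightarrow> 'a \<Rightarrow> 'k)"
  assumes el: "elementary \<phi>" and xy: "x < y" and nz: "\<phi> (eij x y) u v \<noteq> 0"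
  shows "\<phi> (eij x y) = (\<lambda>a b. \<phi> (eij x y) u v * eij u v a b)"
proof (intro ext)
  fix a b
  show "\<phi> (eij x y) a b = \<phi> (eij x y) u v * eij u v a b"
  proof (cases "\<phi> (eij x y) a b = 0")
    case True
    then show ?thesis by (auto simp: eij_def)
  next
    case False
    then have "a = u \<and> b = v" using single[OF el xy nz False] by simp
    then show ?thesis by (simp add: eij_def)
  qed
qed

lemma theta_val:
  fixes \<phi> :: "('a::{finite,order} \<Rightarrow> 'a \<Rightarrow> 'k::field) \<Rightarrow> ('a \<Rightarrow> 'a \<Rightarrow> 'k)"
  assumes el: "elementary \<phi>" and xy: "x < y" and nz: "\<phi> (eij x y) u v \<noteq> 0"
  shows "theta \<phi> x y = (u, v)"
  unfolding theta_def
proof (rule the_equality)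
  show "fst (u, v) < snd (u, v) \<and> (\<exists>k. k \<noteq> 0 \<and> \<phi> (eij x y) = (\<lambda>a b. k * eij (fst (u, v)) (snd (u, v)) a b))"
  proof -
    have "\<phi> (eij x y) = (\<lambda>a b. \<phi> (eij x y) u v * eij u v a b)" by (rule shape[OF el xy nz])
    then have "\<exists>k. k \<noteq> 0 \<and> \<phi> (eij x y) = (\<lambda>a b. k * eij u v a b)" using nz by blast
    then show ?thesis using nz_lt[OF el xy nz] by simp
  qed
next
  fix p :: "'a \<times> 'a"
  assume "fst p < snd p \<and> (\<exists>k. k \<noteq> 0 \<and> \<phi> (eij x y) = (\<lambda>a b. k * eij (fst p) (snd p) a b))"
  then obtain k where k: "\<phi> (eij x y) = (\<lambda>a b. k * eij (fst p) (snd p) a b)" by blast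
  then have "\<phi> (eij x y) u v = k * eij (fst p) (snd p) u v" by (rule fun_cong2)
  then have "k * eij (fst p) (snd p) u v \<noteq> 0" using nz by simp
  then have "eij (fst p) (snd p) u v \<noteq> (0::'k)" by auto
  then show "p = (u, v)" by (cases p) (auto simp: eij_def split: if_splits)
qed

lemma nonzero:
  fixes \<phi> :: "('a::{finite,order} \<Rightarrow> 'a \<Rightarrow> 'k::field) \<Rightarrow> ('a \<Rightarrow> 'a \<Rightarrow> 'k)"
  assumes el: "elementary \<phi>" and xy: "x \<le> y"
  shows "\<exists>u v. \<phi> (eij x y) u v \<noteq> 0"
proof (rule ccontr)
  have la: "is_lie_aut \<phi>" using el unfolding elementary_def by blast
  assume "\<not> (\<exists>u v. \<phi> (eij x y) u v \<noteq> 0)"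
  then have "\<phi> (eij x y) = (\<lambda>a b. 0)" by auto
  also have "\<dots> = \<phi> (\<lambda>a b. 0)" using phi_zero[OF la] by simp
  finally have "eij x y = (\<lambda>a b. (0::'k))" using phi_inj[OF la eij_in[OF xy] zero_in] by blast
  then have "(eij x y x y :: 'k) = 0" by simp
  then show False by (simp add: eij_def)
qed

lemma preimage:
  fixes \<phi> :: "('a::{finite,order} \<Rightarrow> 'a \<Rightarrow> 'k::field) \<Rightarrow> ('a \<Rightarrow> 'a \<Rightarrow> 'k)"
  assumes el: "elementary \<phi>" and uv: "u < v"
  shows "\<exists>x y. x < y \<and> \<phi> (eij x y) u v \<noteq> 0"
proof -
  have la: "is_lie_aut \<phi>" using el unfolding elementary_def by blast
  obtain \<chi> where ch: "\<forall>f\<in>inc_alg. \<phi> f = tilde \<chi> f" using el unfolding elementary_def by blast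
  obtain f where f: "f \<in> inc_alg" "\<phi> f = eij u v" using phi_surj[OF la eij_in[OF less_imp_le[OF uv]]] by blast
  let ?S = "{(x,y). x \<le> y \<and> chain_len x y = chain_len u v}"
  have "\<phi> f = tilde \<chi> f" using ch f(1) by blast
  then have "tilde \<chi> f = eij u v" using f(2) by simp
  then have "tilde \<chi> f u v = 1" by (simp add: eij_def)
  then have "(\<Sum>p\<in>?S. f (fst p) (snd p) * \<chi> (eij (fst p) (snd p)) u v) \<noteq> 0"
    unfolding tilde_def using less_imp_le[OF uv] by simp
  then obtain p where p: "p \<in> ?S" "f (fst p) (snd p) * \<chi> (eij (fst p) (snd p)) u v \<noteq> 0"
    by (meson sum.neutral)
  obtain x y where pxy: "p = (x,y)" by (cases p)
  have xy: "x \<le> y" "chain_len x y = chain_len u v" using p(1) pxy by auto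
  have "chain_len u v \<ge> 1" using chain_len_lt[OF uv] .
  then have "x \<noteq> y" using xy(2) chain_len_refl[of x] by auto
  then have xy': "x < y" using xy(1) by simp
  have "\<chi> (eij x y) u v \<noteq> 0" using p(2) pxy by auto
  moreover have "\<phi> (eij x y) u v = tilde \<chi> (eij x y) u v" using ch[rule_format, OF eij_in[OF xy(1)]] by simp
  moreover have "tilde \<chi> (eij x y) u v = \<chi> (eij x y) u v" using tilde_basis[OF xy(1), of u v \<chi>] uv xy(2) by simp
  ultimately have "\<phi> (eij x y) u v \<noteq> 0" by simp
  then show ?thesis using xy' by blast
qed

theorem lemma5p8:
  fixes \<phi> \<psi> :: "('a::{finite,order} \<Rightarrow> 'a \<Rightarrow> 'k::field) \<Rightarrow> ('a \<Rightarrow> 'a \<Rightarrow> 'k)"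
    and u0 :: 'a
  assumes "poset_connected (UNIV :: 'a set)"
    and "elementary \<phi>" and "elementary \<psi>"
    and "\<forall>x y. x < y \<longrightarrow> theta \<phi> x y = theta \<psi> x y"
    and "\<forall>z. \<phi> (eij z z) u0 u0 = \<psi> (eij z z) u0 u0"
  shows "\<forall>z. \<phi> (eij z z) = \<psi> (eij z z)"
proof
  fix z
  define d where "d a = \<phi> (eij z z) a a - \<psi> (eij z z) a a" for a
  have stp: "d u = d v" if uv: "u < v" for u v
  proof -
    obtain x y where xy: "x < y" "\<phi> (eij x y) u v \<noteq> 0" using preimage[OF assms(2) uv] by blast
    have t1: "theta \<phi> x y = (u, v)" by (rule theta_val[OF assms(2) xy])
    obtain u' v' where nz: "\<psi> (eij x y) u' v' \<noteq> 0" using nonzero[OF assms(3) less_imp_le[OF xy(1)]] by blast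
    have "theta \<psi> x y = (u', v')" by (rule theta_val[OF assms(3) xy(1) nz])
    then have "(u', v') = (u, v)" using t1 assms(4) xy(1) by metis
    then have nz2: "\<psi> (eij x y) u v \<noteq> 0" using nz by simp
    have le: "x \<le> y" using xy(1) by simp
    have A: "\<phi> (eij z z) u u = ((eij z z x x - eij z z y y) :: 'k) + \<phi> (eij z z) v v"
      using rel_diff[OF assms(2) le xy(2), of z] by (simp only: diff_eq_eq)
    have B: "\<psi> (eij z z) u u = ((eij z z x x - eij z z y y) :: 'k) + \<psi> (eij z z) v v"
      using rel_diff[OF assms(3) le nz2, of z] by (simp only: diff_eq_eq)
    show ?thesis unfolding d_def A B by simp
  qed
  have con: "(\<lambda>a b. covers a b \<or> covers b a)\<^sup>*\<^sup>* u0 a" for a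
    using assms(1) unfolding poset_connected_def by blast
  have dall: "d a = d u0" for a
    using con[of a]
  proof (induction rule: rtranclp_induct)
    case base then show ?case by simp
  next
    case (step b c)
    then show ?case using step.IH stp[of b c] stp[of c b] unfolding covers_def by auto
  qed
  have d0: "d u0 = 0" unfolding d_def using assms(5) by simp
  show "\<phi> (eij z z) = \<psi> (eij z z)"
  proof (intro ext)
    fix a b
    show "\<phi> (eij z z) a b = \<psi> (eij z z) a b"
    proof (cases "a = b")
      case True
      then show ?thesis using dall[of a] d0 unfolding d_def by simp
    next
      case False
      then show ?thesis using phi_diag[OF assms(2) False] phi_diag[OF assms(3) False] by simp
    qed
  qed
qed

end
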